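(* Let $(F,v)$ be a valued field. Every nonsingular quadratic space $(V,q)$ over $F$ admits a $v$-norm which is compatible with $q$ of some depth $\varepsilon\in\frac12\Gamma_F$ with $0\le\varepsilon\le v(2)$. Moreover, every hyperbolic quadratic space over $F$ admits a tame (i.e. depth $0$) compatible $v$-norm.
   Context: $F$ is a field with valuation $v\colon F\to\Gamma\cup\{\infty\}$, $\Gamma$ divisible totally ordered abelian group, $\Gamma_F=v(F^\times)$, $\frac12\Gamma_F=\{\gamma\in\Gamma:2\gamma\in\Gamma_F\}$; $v(2)=\infty$ iff $\operatorname{char}F=2$. A quadratic form is nonsingular if its polar form $b_q(x,y)=q(x+y)-q(x)-q(y)$ is nondegenerate. A $v$-norm on a finite-dimensional $F$-space $V$ is a map $\alpha\colon V\to\Gamma\cup\{\infty\}$ with $\alpha(x)=\infty\iff x=0$, $\alpha(\lambda x)=v(\lambda)+\alpha(x)$, $\alpha(x+y)\ge\min(\alpha(x),\alpha(y))$, admitting a basis $(e_i)$ with $\alpha(\sum\lambda_ie_i)=\min_i\alpha(\lambda_ie_i)$. For $\varepsilon\in\Gamma$, $\varepsilon\ge0$, $\alpha$ is compatible of depth $\varepsilon$ with $q$ if (a) $v(b_q(x,y))\ge\alpha(x)+\alpha(y)+\varepsilon$ for all $x,y$; (b) $v(q(x))\ge2\alpha(x)$ for all $x$; (c) for every $x\neq0$ there exists $y\neq0$ with $v(b_q(x,y))=\alpha(x)+\alpha(y)+\varepsilon$. Tame means depth $0$. *)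

theory Defs
  imports Complex_Main "HOL-Library.Extended"
begin

text \<open>Values of the valuation live in \<open>\<Gamma> \<union> {\<infinity>}\<close>, modelled as \<open>'g extended\<close>
  (the constructor \<open>Minf\<close> is never used).\<close>

definition divisible_group :: "'g::linordered_ab_group_add itself \<Rightarrow> bool" where
  "divisible_group _ \<longleftrightarrow> (\<forall>(g::'g) (n::nat). n > 0 \<longrightarrow> (\<exists>h. (\<Sum>i<n. h) = g))"

definition valuation :: "('k::field \<Rightarrow> 'g::linordered_ab_group_add extended) \<Rightarrow> bool" where
  "valuation v \<longleftrightarrow>
     (\<forall>x. v x \<noteq> Minf) \<and>
     (\<forall>x. v x = Pinf \<longleftrightarrow> x = 0) \<and>
     (\<forall>x y. v (x * y) = v x + v y) \<and>
     (\<forall>x y. v (x + y) \<ge> min (v x) (v y))"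

definition half_value_group :: "('k::field \<Rightarrow> 'g::linordered_ab_group_add extended) \<Rightarrow> 'g set" where
  "half_value_group v = {\<gamma>. \<exists>a. a \<noteq> 0 \<and> v a = Fin (\<gamma> + \<gamma>)}"

definition polar :: "('v::ab_group_add \<Rightarrow> 'k::field) \<Rightarrow> 'v \<Rightarrow> 'v \<Rightarrow> 'k" where
  "polar q x y = q (x + y) - q x - q y"

definition quadratic_form :: "('k::field \<Rightarrow> 'v::ab_group_add \<Rightarrow> 'v) \<Rightarrow> ('v \<Rightarrow> 'k) \<Rightarrow> bool" where
  "quadratic_form scale q \<longleftrightarrow>
     (\<forall>a x. q (scale a x) = a * a * q x) \<and>
     (\<forall>x y z. polar q (x + y) z = polar q x z + polar q y z) \<and>
     (\<forall>a x y. polar q (scale a x) y = a * polar q x y)"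

definition nonsingular :: "('v::ab_group_add \<Rightarrow> 'k::field) \<Rightarrow> bool" where
  "nonsingular q \<longleftrightarrow> (\<forall>x. (\<forall>y. polar q x y = 0) \<longrightarrow> x = 0)"

definition fin_dim_space :: "('k::field \<Rightarrow> 'v::ab_group_add \<Rightarrow> 'v) \<Rightarrow> bool" where
  "fin_dim_space scale \<longleftrightarrow> vector_space scale \<and>
     (\<exists>B. finite B \<and> \<not> module.dependent scale B \<and> module.span scale B = UNIV)"

text \<open>Hyperbolic quadratic space: orthogonal sum of hyperbolic planes, i.e. there is a
  basis \<open>e\<^sub>1,\<dots>,e\<^sub>n,f\<^sub>1,\<dots>,f\<^sub>n\<close> with \<open>q(\<Sum>a\<^sub>ie\<^sub>i + b\<^sub>if\<^sub>i) = \<Sum>a\<^sub>ib\<^sub>i\<close>.\<close>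
definition hyperbolic :: "('k::field \<Rightarrow> 'v::ab_group_add \<Rightarrow> 'v) \<Rightarrow> ('v \<Rightarrow> 'k) \<Rightarrow> bool" where
  "hyperbolic scale q \<longleftrightarrow>
     (\<exists>(n::nat) (e::nat \<Rightarrow> 'v) (f::nat \<Rightarrow> 'v).
        inj_on e {..<n} \<and> inj_on f {..<n} \<and> e ` {..<n} \<inter> f ` {..<n} = {} \<and>
        \<not> module.dependent scale (e ` {..<n} \<union> f ` {..<n}) \<and>
        module.span scale (e ` {..<n} \<union> f ` {..<n}) = UNIV \<and>
        (\<forall>a b. q (\<Sum>i<n. scale (a i) (e i) + scale (b i) (f i)) = (\<Sum>i<n. a i * b i)))"

definition v_norm :: "('k::field \<Rightarrow> 'g::linordered_ab_group_add extended) \<Rightarrow>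
    ('k \<Rightarrow> 'v::ab_group_add \<Rightarrow> 'v) \<Rightarrow> ('v \<Rightarrow> 'g extended) \<Rightarrow> bool" where
  "v_norm v scale \<alpha> \<longleftrightarrow>
     (\<forall>x. \<alpha> x \<noteq> Minf) \<and>
     (\<forall>x. \<alpha> x = Pinf \<longleftrightarrow> x = 0) \<and>
     (\<forall>a x. \<alpha> (scale a x) = v a + \<alpha> x) \<and>
     (\<forall>x y. \<alpha> (x + y) \<ge> min (\<alpha> x) (\<alpha> y)) \<and>
     (\<exists>B. finite B \<and> \<not> module.dependent scale B \<and> module.span scale B = UNIV \<and>
        (\<forall>c. \<alpha> (\<Sum>b\<in>B. scale (c b) b) =
               (if B = {} then Pinf else Min ((\<lambda>b. \<alpha> (scale (c b) b)) ` B))))"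

definition compatible_depth :: "('k::field \<Rightarrow> 'g::linordered_ab_group_add extended) \<Rightarrow>
    ('v::ab_group_add \<Rightarrow> 'k) \<Rightarrow> ('v \<Rightarrow> 'g extended) \<Rightarrow> 'g \<Rightarrow> bool" where
  "compatible_depth v q \<alpha> \<epsilon> \<longleftrightarrow>
     0 \<le> \<epsilon> \<and>
     (\<forall>x y. v (polar q x y) \<ge> \<alpha> x + \<alpha> y + Fin \<epsilon>) \<and>
     (\<forall>x. v (q x) \<ge> \<alpha> x + \<alpha> x) \<and>
     (\<forall>x. x \<noteq> 0 \<longrightarrow> (\<exists>y. y \<noteq> 0 \<and> v (polar q x y) = \<alpha> x + \<alpha> y + Fin \<epsilon>))"

end

theory Submission
  imports Defs
begin


lemma v_zero: "valuation v \<Longrightarrow> v 0 = Pinf"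
  unfolding valuation_def by blast
lemma v_mult: "valuation v \<Longrightarrow> v (x * y) = v x + v y"
  unfolding valuation_def by blast
lemma v_add: "valuation v \<Longrightarrow> min (v x) (v y) \<le> v (x + y)"
  unfolding valuation_def by blast
lemma v_fin: "valuation v \<Longrightarrow> x \<noteq> 0 \<Longrightarrow> \<exists>g. v x = Fin g"
  unfolding valuation_def by (metis extended.exhaust)
lemma v_notMinf: "valuation v \<Longrightarrow> v x \<noteq> Minf"
  unfolding valuation_def by blast
lemma v_Pinf: "valuation v \<Longrightarrow> v x = Pinf \<longleftrightarrow> x = 0"
  unfolding valuation_def by blast
lemma v_one: assumes "valuation v" shows "v 1 = Fin 0"
proof -
  obtain g where g: "v 1 = Fin g" using v_fin[OF assms, of 1] by auto
  have "v 1 = v 1 + v 1" using v_mult[OF assms, of 1 1] by simp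
  then show ?thesis using g by simp
qed
lemma v_inv: assumes "valuation v" "a \<noteq> 0" "v a = Fin g" shows "v (inverse a) = Fin (- g)"
proof -
  have "v 1 = v a + v (inverse a)" using v_mult[OF assms(1), of a "inverse a"] assms(2) by simp
  moreover obtain h where "v (inverse a) = Fin h" using v_fin[OF assms(1), of "inverse a"] assms(2) by auto
  ultimately show ?thesis using v_one[OF assms(1)] assms(3) by (simp add: eq_neg_iff_add_eq_0 add.commute)
qed
lemma v_sum_ge: assumes "valuation v" "\<And>i. i \<in> A \<Longrightarrow> t \<le> v (f i)" shows "t \<le> v (sum f A)"
  using assms(2)
proof (induct A rule: infinite_finite_induct)
  case (insert x F)
  then have "t \<le> min (v (f x)) (v (sum f F))" by auto
  also have "\<dots> \<le> v (f x + sum f F)" by (rule v_add[OF assms(1)])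
  finally show ?case using insert by simp
qed (simp_all add: v_zero[OF assms(1)])
lemma v_two: assumes "valuation v" shows "Fin 0 \<le> v 2"
  using v_add[OF assms, of 1 1] v_one[OF assms] by simp

locale QF = vector_space scale for scale :: "'k::field \<Rightarrow> 'v::ab_group_add \<Rightarrow> 'v" +
  fixes q :: "'v \<Rightarrow> 'k"
  assumes qf: "quadratic_form scale q"
begin

lemma pol_add1: "polar q (x + y) z = polar q x z + polar q y z"
  using qf unfolding quadratic_form_def by blast
lemma pol_scale1: "polar q (scale a x) y = a * polar q x y"
  using qf unfolding quadratic_form_def by blast
lemma q_scale: "q (scale a x) = a * a * q x"
  using qf unfolding quadratic_form_def by blast
lemma pol_sym: "polar q x y = polar q y x"
  unfolding polar_def by (simp add: add.commute algebra_simps)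
lemma pol_add2: "polar q z (x + y) = polar q z x + polar q z y"
  using pol_add1 pol_sym by metis
lemma pol_scale2: "polar q y (scale a x) = a * polar q y x"
  using pol_scale1 pol_sym by metis
lemma pol_zero1[simp]: "polar q 0 y = 0"
  using pol_scale1[of 0 0 y] by simp
lemma pol_zero2[simp]: "polar q y 0 = 0"
  using pol_zero1 pol_sym by metis
lemma q_zero[simp]: "q 0 = 0"
  using q_scale[of 0 0] by simp
lemma q_add: "q (x + y) = q x + q y + polar q x y"
  unfolding polar_def by simp
lemma pol_diff1: "polar q (x - y) z = polar q x z - polar q y z"
  using pol_add1[of "x - y" y z] by (simp add: algebra_simps)
lemma pol_sum1: "polar q (\<Sum>i\<in>A. f i) z = (\<Sum>i\<in>A. polar q (f i) z)"
  by (induct A rule: infinite_finite_induct) (auto simp: pol_add1)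
lemma pol_sum2: "polar q z (\<Sum>i\<in>A. f i) = (\<Sum>i\<in>A. polar q z (f i))"
  by (induct A rule: infinite_finite_induct) (auto simp: pol_add2)
lemma pol_self: "polar q x x = 2 * q x"
proof -
  have "x + x = scale 2 x" by (metis one_add_one scale_left_distrib scale_one)
  then have "q (x + x) = 4 * q x" by (simp add: q_scale)
  then show ?thesis unfolding polar_def by simp
qed

definition dual :: "nat \<Rightarrow> (nat \<Rightarrow> 'v) \<Rightarrow> (nat \<Rightarrow> 'v) \<Rightarrow> bool" where
  "dual n b d \<longleftrightarrow> (\<forall>i<n. \<forall>j<n. polar q (b i) (d j) = (if i = j then 1 else 0))"

lemma coord_sum:
  assumes "dual n b d" "J \<subseteq> {..<n}" "j < n"
  shows "polar q (\<Sum>i\<in>J. scale (c i) (b i)) (d j) = (if j \<in> J then c j else 0)"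
proof -
  have "polar q (\<Sum>i\<in>J. scale (c i) (b i)) (d j) = (\<Sum>i\<in>J. c i * (if i = j then 1 else 0))"
    unfolding pol_sum1 pol_scale1 using assms unfolding dual_def
    by (intro sum.cong) auto
  also have "\<dots> = (if j \<in> J then c j else 0)"
    using assms(2) finite_subset[OF assms(2)] by (simp add: if_distrib sum.delta' cong: if_cong)
  finally show ?thesis .
qed

lemma dual_inj: "dual n b d \<Longrightarrow> inj_on b {..<n}"
  unfolding dual_def inj_on_def by (metis lessThan_iff one_neq_zero)

lemma dual_expand:
  assumes "dual n b d" "x \<in> span (b ` {..<n})"
  shows "x = (\<Sum>i<n. scale (polar q x (d i)) (b i))"
proof -
  obtain u where u: "x = (\<Sum>w\<in>b ` {..<n}. scale (u w) w)"
    using assms(2) span_finite[of "b ` {..<n}"] by auto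
  then have x: "x = (\<Sum>i<n. scale (u (b i)) (b i))"
    using sum.reindex[OF dual_inj[OF assms(1)]] by (simp add: comp_def)
  have "polar q x (d j) = u (b j)" if "j < n" for j
    using coord_sum[OF assms(1) order_refl that, of "\<lambda>i. u (b i)"] x that by simp
  then show ?thesis using x by (intro trans[OF x] sum.cong) auto
qed

lemma dual_indep:
  assumes "dual n b d"
  shows "\<not> dependent (b ` {..<n})"
proof
  assume "dependent (b ` {..<n})"
  then obtain t u w where t: "finite t" "t \<subseteq> b ` {..<n}" "(\<Sum>w\<in>t. scale (u w) w) = 0"
    and w: "w \<in> t" "u w \<noteq> 0" unfolding dependent_explicit by blast
  define J where "J = {i. i < n \<and> b i \<in> t}"
  have tJ: "t = b ` J" using t(2) unfolding J_def by auto
  have ij: "inj_on b J" using dual_inj[OF assms] unfolding J_def by (auto intro: inj_on_subset)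
  have s0: "(\<Sum>i\<in>J. scale (u (b i)) (b i)) = 0"
    using t(3) sum.reindex[OF ij, of "\<lambda>w. scale (u w) w"] tJ by (simp add: comp_def)
  obtain j where j: "j \<in> J" "w = b j" using w tJ by auto
  have "polar q (\<Sum>i\<in>J. scale (u (b i)) (b i)) (d j) = u (b j)"
    using coord_sum[OF assms, of J j "\<lambda>i. u (b i)"] j unfolding J_def by auto
  then show False using s0 w j by simp
qed


definition sys :: "nat \<Rightarrow> (nat \<Rightarrow> 'v) \<Rightarrow> (nat \<Rightarrow> 'v) \<Rightarrow> (nat \<Rightarrow> nat) \<Rightarrow> bool" where
  "sys n b d p \<longleftrightarrow> dual n b d \<and> (\<forall>i<n. p i < n \<and> p (p i) = i) \<and>
     (\<forall>i<n. p i = i \<longrightarrow> polar q (b i) (b i) \<noteq> 0 \<and> d i = scale (inverse (polar q (b i) (b i))) (b i)) \<and>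
     (\<forall>i<n. p i \<noteq> i \<longrightarrow> d i = b (p i) \<and> polar q (b i) (b i) = 0)"

lemma proj_W:
  assumes "dual n b d" "j < n"
  shows "polar q (z - (\<Sum>i<n. scale (polar q z (d i)) (b i))) (d j) = 0"
  using coord_sum[OF assms(1) _ assms(2), of "{..<n}" "\<lambda>i. polar q z (d i)"] assms(2)
  by (simp add: pol_diff1)

lemma W_perp_b:
  assumes "sys n b d p" "\<forall>k<n. polar q w (d k) = 0" "j < n"
  shows "polar q w (b j) = 0"
proof (cases "p j = j")
  case True
  then have "d j = scale (inverse (polar q (b j) (b j))) (b j)" "polar q (b j) (b j) \<noteq> 0"
    using assms unfolding sys_def by auto
  then have "b j = scale (polar q (b j) (b j)) (d j)" by simp
  then show ?thesis using assms(2,3) by (metis mult_zero_right pol_scale2)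
next
  case False
  then have "b j = d (p j)" "p j < n" using assms unfolding sys_def by auto
  then show ?thesis using assms(2) by simp
qed

lemma step:
  assumes ns: "nonsingular q" and S: "sys n b d p" and sp: "span (b ` {..<n}) \<noteq> UNIV"
  shows "\<exists>n' b' d' p'. n < n' \<and> sys n' b' d' p'"
proof -
  have du: "dual n b d" using S unfolding sys_def by simp
  define W where "W = {w. \<forall>k<n. polar q w (d k) = 0}"
  define pr where "pr z = (\<Sum>i<n. scale (polar q z (d i)) (b i))" for z
  have prW: "z - pr z \<in> W" for z using proj_W[OF du] unfolding W_def pr_def by auto
  have prs: "pr z \<in> span (b ` {..<n})" for z
    unfolding pr_def by (intro span_sum span_scale span_base) auto
  obtain z where z: "z \<notin> span (b ` {..<n})" using sp by auto
  define w0 where "w0 = z - pr z"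
  have w0W: "w0 \<in> W" using prW w0_def by simp
  have w0nz: "w0 \<noteq> 0" using z prs[of z] unfolding w0_def by auto
  have Wb: "polar q w (b j) = 0" if "w \<in> W" "j < n" for w j
    using W_perp_b[OF S _ that(2)] that(1) unfolding W_def by auto
  have Wpr: "polar q w (pr x) = 0" if "w \<in> W" for w x
    unfolding pr_def pol_sum2 pol_scale2 using Wb[OF that] by simp
  have Wsc: "scale a w \<in> W" if "w \<in> W" for a w using that unfolding W_def by (simp add: pol_scale1)
  obtain y where y: "y \<in> W" "polar q w0 y \<noteq> 0"
  proof -
    have False if "\<forall>y\<in>W. polar q w0 y = 0"
    proof -
      have "polar q w0 x = 0" for x
      proof -
        have "x = pr x + (x - pr x)" by simp
        then have "polar q w0 x = polar q w0 (pr x) + polar q w0 (x - pr x)" by (metis pol_add2)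
        then show ?thesis using Wpr[OF w0W] that prW by simp
      qed
      then show False using ns w0nz unfolding nonsingular_def by blast
    qed
    then show ?thesis using that by blast
  qed
  show ?thesis
  proof (cases "\<exists>x\<in>W. polar q x x \<noteq> 0")
    case True
    then obtain x where x: "x \<in> W" "polar q x x \<noteq> 0" by blast
    define b' where "b' = b(n := x)"
    define d' where "d' = d(n := scale (inverse (polar q x x)) x)"
    define p' where "p' = p(n := n)"
    have xd: "\<forall>k<n. polar q x (d k) = 0" using x(1) unfolding W_def by auto
    have xb: "\<forall>k<n. polar q (b k) x = 0" using Wb[OF x(1)] pol_sym by metis
    have Sp: "\<forall>i<n. p i < n \<and> p (p i) = i" using S unfolding sys_def by blast
    have S3: "\<forall>i<n. p i = i \<longrightarrow> polar q (b i) (b i) \<noteq> 0 \<and> d i = scale (inverse (polar q (b i) (b i))) (b i)"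
      using S unfolding sys_def by blast
    have S4: "\<forall>i<n. p i \<noteq> i \<longrightarrow> d i = b (p i) \<and> polar q (b i) (b i) = 0"
      using S unfolding sys_def by blast
    have "sys (Suc n) b' d' p'"
    proof -
      have "dual (Suc n) b' d'"
        using du xd xb x(2) unfolding dual_def b'_def d'_def by (auto simp: less_Suc_eq pol_scale2)
      moreover have "p' i < Suc n \<and> p' (p' i) = i" if "i < Suc n" for i
        using Sp that unfolding p'_def by (auto simp: less_Suc_eq)
      moreover have "polar q (b' i) (b' i) \<noteq> 0 \<and> d' i = scale (inverse (polar q (b' i) (b' i))) (b' i)"
        if "i < Suc n" "p' i = i" for i
      proof (cases "i = n")
        case True
        then show ?thesis
          using x(2) unfolding b'_def d'_def by simp_all
      next
        case False
        then have "i < n" "p i = i" using that unfolding p'_def by auto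
        then show ?thesis
          using S3 False unfolding b'_def d'_def by simp_all
      qed
      moreover have "d' i = b' (p' i) \<and> polar q (b' i) (b' i) = 0" if "i < Suc n" "p' i \<noteq> i" for i
      proof -
        have "i \<noteq> n" using that unfolding p'_def by auto
        then have i: "i < n" "p i \<noteq> i" using that unfolding p'_def by auto
        then have "p i < n" using Sp by blast
        then show ?thesis
          using S4 i unfolding b'_def d'_def p'_def by auto
      qed
      ultimately show ?thesis unfolding sys_def by blast
    qed
    then show ?thesis by blast
  next
    case False
    then have alt: "polar q x x = 0" if "x \<in> W" for x using that by blast
    define f where "f = scale (inverse (polar q w0 y)) y"
    have fW: "f \<in> W" using Wsc[OF y(1)] f_def by simp
    have ef: "polar q w0 f = 1" "polar q f w0 = 1" using y(2) unfolding f_def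
      by (simp_all add: pol_scale2 pol_scale1 pol_sym[of y w0])
    define b' where "b' = b(n := w0, Suc n := f)"
    define d' where "d' = d(n := f, Suc n := w0)"
    define p' where "p' = p(n := Suc n, Suc n := n)"
    have xd: "\<forall>k<n. polar q x (d k) = 0" if "x \<in> W" for x using that unfolding W_def by auto
    have xb: "\<forall>k<n. polar q (b k) x = 0" if "x \<in> W" for x using Wb[OF that] pol_sym by metis
    have Sp: "\<forall>i<n. p i < n \<and> p (p i) = i" using S unfolding sys_def by blast
    have S3: "\<forall>i<n. p i = i \<longrightarrow> polar q (b i) (b i) \<noteq> 0 \<and> d i = scale (inverse (polar q (b i) (b i))) (b i)"
      using S unfolding sys_def by blast
    have S4: "\<forall>i<n. p i \<noteq> i \<longrightarrow> d i = b (p i) \<and> polar q (b i) (b i) = 0"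
      using S unfolding sys_def by blast
    have a0: "polar q w0 w0 = 0" "polar q f f = 0" using alt w0W fW by auto
    have "sys (Suc (Suc n)) b' d' p'"
    proof -
      have "dual (Suc (Suc n)) b' d'"
        using du xd[OF w0W] xd[OF fW] xb[OF w0W] xb[OF fW] ef a0 unfolding dual_def b'_def d'_def
        by (auto simp: less_Suc_eq)
      moreover have "p' i < Suc (Suc n) \<and> p' (p' i) = i" if "i < Suc (Suc n)" for i
        using Sp that unfolding p'_def by (auto simp: less_Suc_eq)
      moreover have "polar q (b' i) (b' i) \<noteq> 0 \<and> d' i = scale (inverse (polar q (b' i) (b' i))) (b' i)"
        if "i < Suc (Suc n)" "p' i = i" for i
      proof -
        have "i \<noteq> n" "i \<noteq> Suc n" using that unfolding p'_def by auto
        then have "i < n" "p i = i" using that unfolding p'_def by auto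
        then show ?thesis
          using S3 \<open>i \<noteq> n\<close> \<open>i \<noteq> Suc n\<close> unfolding b'_def d'_def by simp_all
      qed
      moreover have "d' i = b' (p' i) \<and> polar q (b' i) (b' i) = 0" if "i < Suc (Suc n)" "p' i \<noteq> i" for i
      proof (cases "i < n")
        case True
        then have i: "p i \<noteq> i" "p i < n" using that Sp unfolding p'_def by auto
        then show ?thesis using S4 True unfolding b'_def d'_def p'_def by auto
      next
        case False
        then have "i = n \<or> i = Suc n" using that by auto
        then show ?thesis using a0 unfolding b'_def d'_def p'_def by auto
      qed
      ultimately show ?thesis unfolding sys_def by blast
    qed
    then show ?thesis by (intro exI[of _ "Suc (Suc n)"]) auto
  qed
qed

lemma sys_bound:
  assumes "finite B" "span B = UNIV" "sys n b d p"
  shows "n \<le> card B"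
proof -
  have du: "dual n b d" using assms(3) unfolding sys_def by simp
  have "card (b ` {..<n}) \<le> card B"
    using independent_span_bound[OF assms(1) dual_indep[OF du]] assms(2) by auto
  then show ?thesis using card_image[OF dual_inj[OF du]] by simp
qed

lemma construct:
  assumes ns: "nonsingular q" and B: "finite B" "span B = UNIV"
  shows "\<exists>n b d p. sys n b d p \<and> span (b ` {..<n}) = UNIV"
proof -
  have "\<forall>n b d p. card B - n = k \<longrightarrow> sys n b d p \<longrightarrow> (\<exists>n b d p. sys n b d p \<and> span (b ` {..<n}) = UNIV)" for k
  proof (induction k rule: less_induct)
    case (less k)
    show ?case
    proof (intro allI impI)
      fix n b d p assume k: "card B - n = k" and S: "sys n b d p"
      show "\<exists>n b d p. sys n b d p \<and> span (b ` {..<n}) = UNIV"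
      proof (cases "span (b ` {..<n}) = UNIV")
        case True then show ?thesis using S by blast
      next
        case False
        then obtain n' b' d' p' where "n < n'" "sys n' b' d' p'" using step[OF ns S] by blast
        moreover then have "n' \<le> card B" using sys_bound[OF B] by blast
        moreover have "card B - n' < k" using calculation k by auto
        ultimately show ?thesis using less.IH[of "card B - n'"] by blast
      qed
    qed
  qed
  moreover have "sys 0 b d p" for b d p unfolding sys_def dual_def by simp
  ultimately show ?thesis by blast
qed

end

lemma min_plus_ext: "min a b + (g::'g::linordered_ab_group_add extended) = min (a + g) (b + g)"
proof (cases "a \<le> b")
  case True then have "a + g \<le> b + g" by (rule add_right_mono)
  then show ?thesis using True by (simp add: min_absorb1)
next
  case False then have "b \<le> a" by simp
  then have "b + g \<le> a + g" by (rule add_right_mono)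
  then show ?thesis using \<open>b \<le> a\<close> by (simp add: min_absorb2)
qed

lemma fin_add: "Fin (a + b) = Fin a + Fin b" by simp


definition half :: "'g::linordered_ab_group_add \<Rightarrow> 'g" where "half g = (SOME h. h + h = g)"

lemma double_le: "(a::'g::linordered_ab_group_add) + a \<le> b + b \<longleftrightarrow> a \<le> b"
proof
  assume h: "a + a \<le> b + b"
  show "a \<le> b"
  proof (rule ccontr)
    assume "\<not> a \<le> b"
    then have "b < a" by simp
    then have "b + b < a + a" by (intro add_strict_mono)
    then show False using h by simp
  qed
qed (simp add: add_mono)

lemma double_inj: "(a::'g::linordered_ab_group_add) + a = b + b \<Longrightarrow> a = b"
  using double_le[of a b] double_le[of b a] by simp

lemma half: assumes "divisible_group TYPE('g::linordered_ab_group_add)" shows "half (g::'g) + half g = g"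
proof -
  have "\<forall>(g::'g) (n::nat). n > 0 \<longrightarrow> (\<exists>h. (\<Sum>i<n. h) = g)" using assms unfolding divisible_group_def .
  then have "\<exists>h::'g. (\<Sum>i<(2::nat). h) = g" by (drule_tac x=g in spec, drule_tac x="2::nat" in spec, simp)
  then obtain h :: 'g where "(\<Sum>i<(2::nat). h) = g" by blast
  then have "h + h = g" by (simp add: numeral_2_eq_2)
  then show ?thesis unfolding half_def by (rule someI[of "\<lambda>h. h + h = g"])
qed

lemma half_uniq: assumes "divisible_group TYPE('g::linordered_ab_group_add)" "(h::'g) + h = g" shows "half g = h"
  using half[OF assms(1), of g] assms(2) double_inj[of "half g" h] by simp

lemma half_add: assumes "divisible_group TYPE('g::linordered_ab_group_add)" shows "half ((a::'g) + b) = half a + half b"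
proof (rule half_uniq[OF assms])
  have "(half a + half b) + (half a + half b) = (half a + half a) + (half b + half b)" by (simp only: ac_simps)
  then show "(half a + half b) + (half a + half b) = a + b" using half[OF assms, of a] half[OF assms, of b] by simp
qed

lemma half_neg: assumes "divisible_group TYPE('g::linordered_ab_group_add)" shows "half (- (a::'g)) = - half a"
  using arg_cong[OF half[OF assms, of a], of uminus] by (intro half_uniq[OF assms]) (simp only: minus_add_distrib)

lemma half_diff: assumes "divisible_group TYPE('g::linordered_ab_group_add)" shows "half ((a::'g) - b) = half a - half b"
  using half_add[OF assms, of a "-b"] half_neg[OF assms, of b] by simp

lemma half_zero: assumes "divisible_group TYPE('g::linordered_ab_group_add)" shows "half (0::'g) = 0"
  by (rule half_uniq[OF assms]) simp

lemma half_double: assumes "divisible_group TYPE('g::linordered_ab_group_add)" shows "half ((a::'g) + a) = a"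
  by (rule half_uniq[OF assms]) simp

definition fval :: "'g extended \<Rightarrow> 'g::linordered_ab_group_add" where
  "fval e = (case e of Fin g \<Rightarrow> g | _ \<Rightarrow> 0)"

lemma fval_Fin[simp]: "fval (Fin g) = g" unfolding fval_def by simp

locale QV = QF scale q for scale :: "'k::field \<Rightarrow> 'v::ab_group_add \<Rightarrow> 'v" and q +
  fixes v :: "'k \<Rightarrow> 'g::linordered_ab_group_add extended"
  assumes val: "valuation v"
begin

definition nrm :: "nat \<Rightarrow> (nat \<Rightarrow> 'v) \<Rightarrow> (nat \<Rightarrow> 'g) \<Rightarrow> 'v \<Rightarrow> 'g extended" where
  "nrm n d \<gamma> x = (if n = 0 then Pinf else Min ((\<lambda>i. v (polar q x (d i)) + Fin (\<gamma> i)) ` {..<n}))"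

lemma F2: "i < n \<Longrightarrow> nrm n d \<gamma> x \<le> v (polar q x (d i)) + Fin (\<gamma> i)"
  unfolding nrm_def by (auto intro: Min_le)
lemma F3: "(\<And>i. i < n \<Longrightarrow> t \<le> v (polar q x (d i)) + Fin (\<gamma> i)) \<Longrightarrow> t \<le> nrm n d \<gamma> x"
  unfolding nrm_def by (auto intro: Min.boundedI)
lemma F4: "0 < n \<Longrightarrow> \<exists>i<n. nrm n d \<gamma> x = v (polar q x (d i)) + Fin (\<gamma> i)"
proof -
  assume "0 < n"
  then have "Min ((\<lambda>i. v (polar q x (d i)) + Fin (\<gamma> i)) ` {..<n}) \<in> (\<lambda>i. v (polar q x (d i)) + Fin (\<gamma> i)) ` {..<n}"
    by (intro Min_in) auto
  then show ?thesis using \<open>0 < n\<close> unfolding nrm_def by auto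
qed

lemma plus_Fin_Pinf: "e + Fin g = Pinf \<longleftrightarrow> e = Pinf"
  by (cases e) auto

lemma alpha_unit:
  assumes "j < n" "\<And>k. k < n \<Longrightarrow> polar q y (d k) = (if k = j then s else 0)"
  shows "nrm n d \<gamma> y = v s + Fin (\<gamma> j)"
proof (rule antisym)
  show "nrm n d \<gamma> y \<le> v s + Fin (\<gamma> j)" using F2[OF assms(1), of d \<gamma> y] assms(2)[OF assms(1)] by simp
  show "v s + Fin (\<gamma> j) \<le> nrm n d \<gamma> y"
    by (rule F3) (auto simp: assms(2) v_zero[OF val])
qed

end


context QV begin

lemma norm_ok:
  assumes du: "dual n b d" and sp: "span (b ` {..<n}) = UNIV" and e0: "0 \<le> \<epsilon>"
    and A: "\<forall>i<n. \<forall>j<n. Fin (\<gamma> i + \<gamma> j + \<epsilon>) \<le> v (polar q (b i) (b j))"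
    and B: "\<forall>i<n. Fin (\<gamma> i + \<gamma> i) \<le> v (q (b i))"
    and C: "\<forall>i<n. nrm n d \<gamma> (d i) = Fin (- \<gamma> i - \<epsilon>)"
  shows "v_norm v scale (nrm n d \<gamma>) \<and> compatible_depth v q (nrm n d \<gamma>) \<epsilon>"
proof -
  define \<alpha> where "\<alpha> = nrm n d \<gamma>"
  define c where "c i x = polar q x (d i)" for i x
  have exp: "(\<Sum>i<n. scale (c i x) (b i)) = x" for x
    using dual_expand[OF du, of x] sp unfolding c_def by simp
  have csc: "c i (scale a x) = a * c i x" for i a x unfolding c_def by (simp add: pol_scale1)
  have cadd: "c i (x + y) = c i x + c i y" for i x y unfolding c_def by (simp add: pol_add1)
  have f2: "i < n \<Longrightarrow> \<alpha> x \<le> v (c i x) + Fin (\<gamma> i)" for i x unfolding \<alpha>_def c_def by (rule F2)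
  have f3: "(\<And>i. i < n \<Longrightarrow> t \<le> v (c i x) + Fin (\<gamma> i)) \<Longrightarrow> t \<le> \<alpha> x" for t x
    unfolding \<alpha>_def c_def by (rule F3)
  have f4: "0 < n \<Longrightarrow> \<exists>i<n. \<alpha> x = v (c i x) + Fin (\<gamma> i)" for x unfolding \<alpha>_def c_def by (rule F4)
  have ab: "\<alpha> (b i) = Fin (\<gamma> i)" if "i < n" for i
    using alpha_unit[OF that, of "b i" d 1 \<gamma>] du that v_one[OF val] unfolding \<alpha>_def dual_def by auto
  have vnm: "v a \<noteq> Minf" for a using v_notMinf[OF val] .
  have anm: "\<alpha> x \<noteq> Minf" for x
  proof (cases "n = 0")
    case True then show ?thesis unfolding \<alpha>_def nrm_def by simp
  next
    case False
    then obtain i where "\<alpha> x = v (c i x) + Fin (\<gamma> i)" using f4 by blast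
    then show ?thesis using vnm[of "c i x"] by (cases "v (c i x)") auto
  qed
  have apinf: "\<alpha> x = Pinf \<longleftrightarrow> x = 0" for x
  proof
    assume "x = 0"
    then show "\<alpha> x = Pinf" using f3[of Pinf x] unfolding c_def by (simp add: v_zero[OF val])
  next
    assume a: "\<alpha> x = Pinf"
    have "c i x = 0" if "i < n" for i
      using f2[OF that, of x] a plus_Fin_Pinf v_Pinf[OF val] by auto
    then show "x = 0" using exp[of x] by simp
  qed
  have ascale: "\<alpha> (scale a x) = v a + \<alpha> x" for a x
  proof (cases "n = 0")
    case True then show ?thesis unfolding \<alpha>_def nrm_def using vnm[of a] by (cases "v a") auto
  next
    case False
    show ?thesis
    proof (rule antisym)
      obtain i where i: "i < n" "\<alpha> x = v (c i x) + Fin (\<gamma> i)" using f4 False by blast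
      have "\<alpha> (scale a x) \<le> v (c i (scale a x)) + Fin (\<gamma> i)" by (rule f2[OF i(1)])
      also have "\<dots> = v a + \<alpha> x" using i(2) by (simp add: csc v_mult[OF val] add.assoc)
      finally show "\<alpha> (scale a x) \<le> v a + \<alpha> x" .
      show "v a + \<alpha> x \<le> \<alpha> (scale a x)"
      proof (rule f3)
        fix j assume j: "j < n"
        have "v a + \<alpha> x \<le> v a + (v (c j x) + Fin (\<gamma> j))" by (rule add_left_mono[OF f2[OF j]])
        also have "\<dots> = v (c j (scale a x)) + Fin (\<gamma> j)" by (simp add: csc v_mult[OF val] add.assoc)
        finally show "v a + \<alpha> x \<le> v (c j (scale a x)) + Fin (\<gamma> j)" .
      qed
    qed
  qed
  have amin: "min (\<alpha> x) (\<alpha> y) \<le> \<alpha> (x + y)" for x y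
  proof (rule f3)
    fix i assume i: "i < n"
    have "min (\<alpha> x) (\<alpha> y) \<le> min (v (c i x) + Fin (\<gamma> i)) (v (c i y) + Fin (\<gamma> i))"
      using f2[OF i, of x] f2[OF i, of y] by (auto simp: min_def)
    also have "\<dots> = min (v (c i x)) (v (c i y)) + Fin (\<gamma> i)" by (simp add: min_plus_ext)
    also have "\<dots> \<le> v (c i (x + y)) + Fin (\<gamma> i)"
      unfolding cadd by (rule add_right_mono[OF v_add[OF val]])
    finally show "min (\<alpha> x) (\<alpha> y) \<le> v (c i (x + y)) + Fin (\<gamma> i)" .
  qed
  have basis: "\<alpha> (\<Sum>\<beta>\<in>b ` {..<n}. scale (u \<beta>) \<beta>) =
      (if b ` {..<n} = {} then Pinf else Min ((\<lambda>\<beta>. \<alpha> (scale (u \<beta>) \<beta>)) ` (b ` {..<n})))" for u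
  proof -
    define x where "x = (\<Sum>i<n. scale (u (b i)) (b i))"
    have sx: "(\<Sum>\<beta>\<in>b ` {..<n}. scale (u \<beta>) \<beta>) = x"
      unfolding x_def using sum.reindex[OF dual_inj[OF du], of "\<lambda>\<beta>. scale (u \<beta>) \<beta>"] by (simp add: comp_def)
    have cx: "c j x = u (b j)" if "j < n" for j
      using coord_sum[OF du order_refl that, of "\<lambda>i. u (b i)"] that unfolding c_def x_def by simp
    have im: "(\<lambda>\<beta>. \<alpha> (scale (u \<beta>) \<beta>)) ` (b ` {..<n}) = (\<lambda>i. v (c i x) + Fin (\<gamma> i)) ` {..<n}"
      unfolding image_image using ascale ab cx by (intro image_cong) auto
    show ?thesis unfolding sx im unfolding \<alpha>_def c_def nrm_def by (auto simp: lessThan_empty_iff)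
  qed
  have vn: "v_norm v scale \<alpha>"
    unfolding v_norm_def
    using anm apinf ascale amin basis dual_indep[OF du] sp by (intro conjI allI exI[of _ "b ` {..<n}"]) auto
  have pa: "\<alpha> x + \<alpha> y + Fin \<epsilon> \<le> v (polar q x y)" for x y
  proof -
    have "polar q x y = polar q (\<Sum>i<n. scale (c i x) (b i)) (\<Sum>j<n. scale (c j y) (b j))"
      by (simp add: exp)
    also have "\<dots> = (\<Sum>i<n. \<Sum>j<n. c i x * (c j y * polar q (b i) (b j)))"
      by (simp add: pol_sum1 pol_sum2 pol_scale1 pol_scale2 sum_distrib_left) (subst sum.swap, simp add: ac_simps)
    finally have pe: "polar q x y = \<dots>" .
    have "\<alpha> x + \<alpha> y + Fin \<epsilon> \<le> v (c i x * (c j y * polar q (b i) (b j)))" if ij: "i < n" "j < n" for i j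
    proof -
      have "\<alpha> x + \<alpha> y + Fin \<epsilon> \<le> (v (c i x) + Fin (\<gamma> i)) + (v (c j y) + Fin (\<gamma> j)) + Fin \<epsilon>"
        by (intro add_right_mono add_mono f2 ij)
      also have "\<dots> = v (c i x) + (v (c j y) + Fin (\<gamma> i + \<gamma> j + \<epsilon>))" by (simp only: fin_add ac_simps)
      also have "\<dots> \<le> v (c i x) + (v (c j y) + v (polar q (b i) (b j)))"
        using A ij by (intro add_left_mono) auto
      also have "\<dots> = v (c i x * (c j y * polar q (b i) (b j)))" by (simp add: v_mult[OF val])
      finally show ?thesis .
    qed
    then show ?thesis unfolding pe by (intro v_sum_ge[OF val]) auto
  qed
  have part_ge: "\<alpha> x \<le> \<alpha> (\<Sum>i\<in>J. scale (c i x) (b i))" if J: "J \<subseteq> {..<n}" for J x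
  proof (rule f3)
    fix k assume k: "k < n"
    have "c k (\<Sum>i\<in>J. scale (c i x) (b i)) = (if k \<in> J then c k x else 0)"
      using coord_sum[OF du J k, of "\<lambda>i. c i x"] unfolding c_def by simp
    then show "\<alpha> x \<le> v (c k (\<Sum>i\<in>J. scale (c i x) (b i))) + Fin (\<gamma> k)"
      using f2[OF k, of x] by (simp add: v_zero[OF val])
  qed
  have e0': "a \<le> a + Fin \<epsilon>" for a :: "'g extended"
  proof -
    have "a + 0 \<le> a + Fin \<epsilon>" by (rule add_left_mono) (simp add: zero_extended_def e0)
    then show ?thesis by simp
  qed
  have pb: "\<alpha> x + \<alpha> x \<le> v (q x)" for x
  proof -
    define w where "w i = scale (c i x) (b i)" for i
    have "m \<le> n \<Longrightarrow> \<alpha> x + \<alpha> x \<le> v (q (\<Sum>i<m. w i))" for m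
    proof (induction m)
      case 0 then show ?case by (simp add: v_zero[OF val])
    next
      case (Suc m)
      define s where "s = (\<Sum>i<m. w i)"
      have m: "m < n" using Suc.prems by simp
      have t1: "\<alpha> x + \<alpha> x \<le> v (q s)" using Suc by (simp add: s_def)
      have "\<alpha> x + \<alpha> x \<le> (v (c m x) + Fin (\<gamma> m)) + (v (c m x) + Fin (\<gamma> m))"
        by (intro add_mono f2 m)
      also have "\<dots> = v (c m x) + v (c m x) + Fin (\<gamma> m + \<gamma> m)" by (simp only: fin_add ac_simps)
      also have "\<dots> \<le> v (c m x) + v (c m x) + v (q (b m))" using B m by (intro add_left_mono) auto
      also have "\<dots> = v (q (w m))" unfolding w_def q_scale by (simp add: v_mult[OF val] add.assoc)
      finally have t2: "\<alpha> x + \<alpha> x \<le> v (q (w m))" .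
      have as: "\<alpha> x \<le> \<alpha> s" using part_ge[of "{..<m}" x] m unfolding s_def w_def by auto
      have aw: "\<alpha> x \<le> \<alpha> (w m)" using part_ge[of "{m}" x] m unfolding w_def by auto
      have "\<alpha> x + \<alpha> x \<le> \<alpha> s + \<alpha> (w m)" by (intro add_mono as aw)
      also have "\<dots> \<le> \<alpha> s + \<alpha> (w m) + Fin \<epsilon>" by (rule e0')
      also have "\<dots> \<le> v (polar q s (w m))" by (rule pa)
      finally have t3: "\<alpha> x + \<alpha> x \<le> v (polar q s (w m))" .
      have "\<alpha> x + \<alpha> x \<le> min (min (v (q s)) (v (q (w m)))) (v (polar q s (w m)))"
        using t1 t2 t3 by simp
      also have "\<dots> \<le> min (v (q s + q (w m))) (v (polar q s (w m)))"
        by (intro min.mono v_add[OF val] order_refl)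
      also have "\<dots> \<le> v (q s + q (w m) + polar q s (w m))" by (rule v_add[OF val])
      also have "\<dots> = v (q (\<Sum>i<Suc m. w i))" by (simp add: s_def q_add)
      finally show ?case .
    qed
    from this[of n] show ?thesis using exp[of x] unfolding w_def by simp
  qed
  have pc: "\<exists>y. y \<noteq> 0 \<and> v (polar q x y) = \<alpha> x + \<alpha> y + Fin \<epsilon>" if x: "x \<noteq> 0" for x
  proof -
    have "n \<noteq> 0" using exp[of x] x by (cases "n = 0") auto
    then obtain i where i: "i < n" "\<alpha> x = v (c i x) + Fin (\<gamma> i)" using f4 by blast
    have dnz: "d i \<noteq> 0" using du i(1) unfolding dual_def by force
    have e1: "\<alpha> (d i) = Fin (- \<gamma> i - \<epsilon>)" using C i unfolding \<alpha>_def by simp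
    have "\<alpha> x + \<alpha> (d i) + Fin \<epsilon> = v (c i x) + (Fin (\<gamma> i) + Fin (- \<gamma> i - \<epsilon>) + Fin \<epsilon>)"
      unfolding i(2) e1 by (simp only: ac_simps)
    also have "\<dots> = v (c i x) + 0" by (simp add: zero_extended_def)
    also have "\<dots> = v (c i x)" by simp
    finally show ?thesis using dnz unfolding c_def by (intro exI[of _ "d i"]) auto
  qed
  show ?thesis using vn pa pb pc e0 unfolding compatible_depth_def \<alpha>_def by blast
qed

end

context QV begin

lemma nonsing_case:
  assumes dv: "divisible_group TYPE('g)" and S: "sys n b d p" and sp: "span (b ` {..<n}) = UNIV"
  shows "\<exists>\<alpha> \<epsilon>. v_norm v scale \<alpha> \<and> \<epsilon> \<in> half_value_group v \<and> 0 \<le> \<epsilon> \<and> Fin \<epsilon> \<le> v 2 \<and>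
                    compatible_depth v q \<alpha> \<epsilon>"
proof -
  have du: "dual n b d" using S unfolding sys_def by blast
  have Sp: "\<And>i. i < n \<Longrightarrow> p i < n \<and> p (p i) = i" using S unfolding sys_def by blast
  have S3: "\<And>i. i < n \<Longrightarrow> p i = i \<Longrightarrow> polar q (b i) (b i) \<noteq> 0 \<and> d i = scale (inverse (polar q (b i) (b i))) (b i)"
    using S unfolding sys_def by blast
  have S4: "\<And>i. i < n \<Longrightarrow> p i \<noteq> i \<Longrightarrow> d i = b (p i) \<and> polar q (b i) (b i) = 0"
    using S unfolding sys_def by blast
  define u where "u i = (if q (b i) \<noteq> 0 then fval (v (q (b i)))
      else if q (b (p i)) \<noteq> 0 then - fval (v (q (b (p i)))) else 0)" for i
  define \<epsilon> where "\<epsilon> = (if (2::'k) = 0 then Max (insert 0 ((\<lambda>i. half (- (u i + u (p i)))) ` {..<n}))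
      else fval (v 2))"
  define \<gamma> where "\<gamma> i = (if p i = i then half (u i) else half (half (u i - u (p i)) - \<epsilon>))" for i
  have vq: "v (q (b i)) = Fin (u i)" if "q (b i) \<noteq> 0" for i
    using v_fin[OF val that] that unfolding u_def by auto
  have v2: "v 2 = Fin \<epsilon>" if "(2::'k) \<noteq> 0"
    using v_fin[OF val that] that unfolding \<epsilon>_def by auto
  have R3: "(2::'k) \<noteq> 0 \<and> q (b i) \<noteq> 0" if "i < n" "p i = i" for i
    using S3[OF that] by (simp add: pol_self)
  have qz: "q (b i) = 0" if "i < n" "p i \<noteq> i" "(2::'k) \<noteq> 0" for i
    using S4[OF that(1,2)] that(3) by (simp add: pol_self)
  have R2: "0 \<le> \<epsilon>"
  proof (cases "(2::'k) = 0")
    case True then show ?thesis unfolding \<epsilon>_def by (simp add: Max_ge_iff)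
  next
    case False then show ?thesis using v2 v_two[OF val] by simp
  qed
  have R1: "half (- (u i + u (p i))) \<le> \<epsilon>" if i: "i < n" "p i \<noteq> i" for i
  proof (cases "(2::'k) = 0")
    case True then show ?thesis unfolding \<epsilon>_def using i by (simp add: Max_ge_iff)
  next
    case False
    have pi: "p i < n" "p (p i) = i" "p (p i) \<noteq> p i" using Sp[OF i(1)] i(2) by auto
    have "q (b i) = 0" "q (b (p i)) = 0" using qz[OF i False] qz[OF pi(1) pi(3) False] by auto
    then have "u i = 0" "u (p i) = 0" unfolding u_def using pi(2) by auto
    then show ?thesis using R2 half_zero[OF dv] by simp
  qed
  have pair: "\<gamma> i + \<gamma> (p i) = - \<epsilon>" if i: "i < n" "p i \<noteq> i" for i
  proof -
    have pi: "p (p i) = i" "p (p i) \<noteq> p i" using Sp[OF i(1)] i(2) by auto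
    have h0: "half (u i - u (p i)) + half (u (p i) - u i) = 0"
      by (simp add: half_add[OF dv, symmetric] half_zero[OF dv])
    have "\<gamma> i + \<gamma> (p i) = half ((half (u i - u (p i)) - \<epsilon>) + (half (u (p i) - u i) - \<epsilon>))"
      unfolding \<gamma>_def using i(2) pi by (simp add: half_add[OF dv])
    also have "(half (u i - u (p i)) - \<epsilon>) + (half (u (p i) - u i) - \<epsilon>) = (- \<epsilon>) + (- \<epsilon>)"
      using h0 by (simp add: algebra_simps)
    finally show ?thesis using half_double[OF dv, of "- \<epsilon>"] by simp
  qed
  have gfix: "\<gamma> i + \<gamma> i = u i" if "p i = i" for i
    unfolding \<gamma>_def using that half[OF dv] by simp
  have A: "\<forall>i<n. \<forall>j<n. Fin (\<gamma> i + \<gamma> j + \<epsilon>) \<le> v (polar q (b i) (b j))"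
  proof (intro allI impI)
    fix i j assume ij: "i < n" "j < n"
    show "Fin (\<gamma> i + \<gamma> j + \<epsilon>) \<le> v (polar q (b i) (b j))"
    proof (cases "p j = j")
      case True
      have bj: "b j = scale (polar q (b j) (b j)) (d j)" using S3[OF ij(2) True] by simp
      have "polar q (b i) (b j) = polar q (b j) (b j) * (if i = j then 1 else 0)"
        using du ij unfolding dual_def by (subst bj) (simp add: pol_scale2)
      moreover have "v (polar q (b j) (b j)) = Fin (\<epsilon> + u j)"
        using R3[OF ij(2) True] v2 vq by (simp add: pol_self v_mult[OF val])
      ultimately show ?thesis using gfix[OF True] by (auto simp: v_zero[OF val] ac_simps)
    next
      case False
      have pj: "p j < n" "p (p j) = j" "p (p j) \<noteq> p j" using Sp[OF ij(2)] False by auto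
      have "b j = d (p j)" using S4[OF pj(1) pj(3)] pj(2) by simp
      then have "polar q (b i) (b j) = (if i = p j then 1 else 0)" using du ij pj unfolding dual_def by simp
      moreover have "\<gamma> (p j) + \<gamma> j + \<epsilon> = 0" using pair[OF ij(2) False] by (simp add: ac_simps)
      ultimately show ?thesis by (auto simp: v_zero[OF val] v_one[OF val])
    qed
  qed
  have B: "\<forall>i<n. Fin (\<gamma> i + \<gamma> i) \<le> v (q (b i))"
  proof (intro allI impI)
    fix i assume i: "i < n"
    show "Fin (\<gamma> i + \<gamma> i) \<le> v (q (b i))"
    proof (cases "q (b i) = 0")
      case True then show ?thesis by (simp add: v_zero[OF val])
    next
      case False
      show ?thesis
      proof (cases "p i = i")
        case True then show ?thesis using gfix vq[OF False] by simp
      next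
        case pF: False
        have "\<gamma> i + \<gamma> i = half (u i - u (p i)) - \<epsilon>" unfolding \<gamma>_def using pF half[OF dv] by simp
        also have "\<dots> \<le> half (u i - u (p i)) - half (- (u i + u (p i)))" using R1[OF i pF] by simp
        also have "\<dots> = half ((u i - u (p i)) - (- (u i + u (p i))))" by (rule half_diff[OF dv, symmetric])
        also have "(u i - u (p i)) - (- (u i + u (p i))) = u i + u i" by (simp add: algebra_simps)
        also have "half (u i + u i) = u i" by (rule half_double[OF dv])
        finally show ?thesis using vq[OF False] by simp
      qed
    qed
  qed
  have C: "\<forall>i<n. nrm n d \<gamma> (d i) = Fin (- \<gamma> i - \<epsilon>)"
  proof (intro allI impI)
    fix i assume i: "i < n"
    show "nrm n d \<gamma> (d i) = Fin (- \<gamma> i - \<epsilon>)"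
    proof (cases "p i = i")
      case True
      define P where "P = polar q (b i) (b i)"
      have P: "P \<noteq> 0" "d i = scale (inverse P) (b i)" using S3[OF i True] unfolding P_def by auto
      have vP: "v P = Fin (\<epsilon> + u i)"
        using R3[OF i True] v2 vq unfolding P_def by (simp add: pol_self v_mult[OF val])
      have "nrm n d \<gamma> (d i) = v (inverse P) + Fin (\<gamma> i)"
        using du i unfolding dual_def P(2) by (intro alpha_unit[OF i]) (simp add: pol_scale1)
      also have "\<dots> = Fin (- (\<epsilon> + u i) + \<gamma> i)" using v_inv[OF val P(1) vP] by simp
      also have "- (\<epsilon> + u i) + \<gamma> i = - \<gamma> i - \<epsilon>" using gfix[OF True] by (simp add: algebra_simps)
      finally show ?thesis .
    next
      case False
      have pi: "p i < n" "p (p i) = i" "p (p i) \<noteq> p i" using Sp[OF i] False by auto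
      have di: "d i = b (p i)" using S4[OF i False] by simp
      have "nrm n d \<gamma> (d i) = v 1 + Fin (\<gamma> (p i))"
        using du i pi unfolding dual_def di by (intro alpha_unit[OF pi(1)]) simp
      also have "\<dots> = Fin (- \<gamma> i - \<epsilon>)" using pair[OF i False] v_one[OF val]
        by (simp add: algebra_simps eq_neg_iff_add_eq_0)
      finally show ?thesis .
    qed
  qed
  have main: "v_norm v scale (nrm n d \<gamma>) \<and> compatible_depth v q (nrm n d \<gamma>) \<epsilon>"
    by (rule norm_ok[OF du sp R2 A B C])
  have le2: "Fin \<epsilon> \<le> v 2"
    using v2 by (cases "(2::'k) = 0") (auto simp: v_zero[OF val])
  have hv: "\<epsilon> \<in> half_value_group v"
  proof (cases "(2::'k) = 0")
    case False
    then have h: "v (2 * 2) = Fin (\<epsilon> + \<epsilon>)" using v2 v_mult[OF val, of 2 2] by simp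
    have nz: "(2::'k) * 2 \<noteq> 0" using False mult_eq_0_iff by blast
    show ?thesis unfolding half_value_group_def using nz h by blast
  next
    case True
    have "\<epsilon> \<in> insert 0 ((\<lambda>i. half (- (u i + u (p i)))) ` {..<n})"
      unfolding \<epsilon>_def using True by (simp del: insert_iff)
    then show ?thesis
    proof
      assume "\<epsilon> = 0"
      then show ?thesis unfolding half_value_group_def using v_one[OF val] by (intro CollectI exI[of _ 1]) simp
    next
      assume "\<epsilon> \<in> (\<lambda>i. half (- (u i + u (p i)))) ` {..<n}"
      then obtain i where i: "i < n" "\<epsilon> = half (- (u i + u (p i)))" by auto
      have ee: "\<epsilon> + \<epsilon> = - (u i + u (p i))" using i(2) half[OF dv] by simp
      have ppi: "p (p i) = i" using Sp[OF i(1)] by simp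
      show ?thesis
      proof (cases "q (b i) \<noteq> 0 \<and> q (b (p i)) \<noteq> 0")
        case True
        have "v (q (b i) * q (b (p i))) = Fin (u i + u (p i))" using vq True by (simp add: v_mult[OF val])
        then have "v (inverse (q (b i) * q (b (p i)))) = Fin (- (u i + u (p i)))"
          using v_inv[OF val, of "q (b i) * q (b (p i))"] True by simp
        then have "v (inverse (q (b i) * q (b (p i)))) = Fin (\<epsilon> + \<epsilon>)" using ee by simp
        then show ?thesis unfolding half_value_group_def using True
          by (intro CollectI exI[of _ "inverse (q (b i) * q (b (p i)))"]) simp
      next
        case False
        then have "u i + u (p i) = 0" unfolding u_def using ppi by auto
        then show ?thesis unfolding half_value_group_def using ee v_one[OF val]
          by (intro CollectI exI[of _ 1]) simp
      qed
    qed
  qed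
  show ?thesis using main le2 hv R2 by blast
qed

end



context QV begin

lemma hyp_case:
  assumes H: "hyperbolic scale q"
  shows "\<exists>\<alpha>. v_norm v scale \<alpha> \<and> compatible_depth v q \<alpha> 0"
proof -
  obtain m and e f :: "nat \<Rightarrow> 'v" where H1: "inj_on e {..<m} \<and> inj_on f {..<m} \<and> e ` {..<m} \<inter> f ` {..<m} = {} \<and>
        \<not> dependent (e ` {..<m} \<union> f ` {..<m}) \<and>
        span (e ` {..<m} \<union> f ` {..<m}) = UNIV \<and>
        (\<forall>a b. q (\<Sum>i<m. scale (a i) (e i) + scale (b i) (f i)) = (\<Sum>i<m. a i * b i))"
    using H unfolding hyperbolic_def by (elim exE) (rule that)
  have sp0: "span (e ` {..<m} \<union> f ` {..<m}) = UNIV" using H1 by blast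
  have Q: "\<And>a b. q (\<Sum>i<m. scale (a i) (e i) + scale (b i) (f i)) = (\<Sum>i<m. a i * b i)"
    using H1 by blast
  define E where "E a b = (\<Sum>i<m. scale (a i) (e i) + scale (b i) (f i))" for a b
  define \<delta> :: "nat \<Rightarrow> nat \<Rightarrow> 'k" where "\<delta> i = (\<lambda>k. if k = i then 1 else 0)" for i
  define z :: "nat \<Rightarrow> 'k" where "z = (\<lambda>k. 0)"
  have QE: "q (E a b) = (\<Sum>i<m. a i * b i)" for a b unfolding E_def by (rule Q)
  have Eadd: "E a b + E a' b' = E (\<lambda>k. a k + a' k) (\<lambda>k. b k + b' k)" for a b a' b'
    unfolding E_def sum.distrib[symmetric] by (intro sum.cong) (simp_all add: scale_left_distrib ac_simps)
  have Ee: "E (\<delta> i) z = e i" if "i < m" for i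
  proof -
    have "E (\<delta> i) z = (\<Sum>k<m. if k = i then e k else 0)"
      unfolding E_def \<delta>_def z_def by (intro sum.cong) auto
    then show ?thesis using that by simp
  qed
  have Ef: "E z (\<delta> i) = f i" if "i < m" for i
  proof -
    have "E z (\<delta> i) = (\<Sum>k<m. if k = i then f k else 0)"
      unfolding E_def \<delta>_def z_def by (intro sum.cong) auto
    then show ?thesis using that by simp
  qed
  have PEE: "polar q (e i) (e j) = 0" if "i < m" "j < m" for i j
  proof -
    have "e i + e j = E (\<lambda>k. \<delta> i k + \<delta> j k) (\<lambda>k. z k + z k)"
      using Eadd[of "\<delta> i" z "\<delta> j" z] Ee[OF that(1)] Ee[OF that(2)] by simp
    then show ?thesis unfolding polar_def using that by (simp add: QE Ee[symmetric] z_def)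
  qed
  have PFF: "polar q (f i) (f j) = 0" if "i < m" "j < m" for i j
  proof -
    have "f i + f j = E (\<lambda>k. z k + z k) (\<lambda>k. \<delta> i k + \<delta> j k)"
      using Eadd[of z "\<delta> i" z "\<delta> j"] Ef[OF that(1)] Ef[OF that(2)] by simp
    then show ?thesis unfolding polar_def using that by (simp add: QE Ef[symmetric] z_def)
  qed
  have PEF: "polar q (e i) (f j) = (if i = j then 1 else 0)" if "i < m" "j < m" for i j
  proof -
    have "e i + f j = E (\<lambda>k. \<delta> i k + z k) (\<lambda>k. z k + \<delta> j k)"
      using Eadd[of "\<delta> i" z z "\<delta> j"] Ee[OF that(1)] Ef[OF that(2)] by simp
    then have "polar q (e i) (f j) = (\<Sum>k<m. \<delta> i k * \<delta> j k)" unfolding polar_def using that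
      by (simp add: QE Ee[symmetric] Ef[symmetric] z_def)
    also have "\<dots> = (\<Sum>k<m. if k = i then \<delta> j k else 0)"
      by (intro sum.cong) (auto simp: \<delta>_def)
    also have "\<dots> = (if i = j then 1 else 0)" using that by (simp add: \<delta>_def)
    finally show ?thesis .
  qed
  have qe: "q (e i) = 0" if "i < m" for i using QE[of "\<delta> i" z] Ee[OF that] by (simp add: z_def)
  have qf': "q (f i) = 0" if "i < m" for i using QE[of z "\<delta> i"] Ef[OF that] by (simp add: z_def)
  define N where "N = m + m"
  define b where "b k = (if k < m then e k else f (k - m))" for k
  define d where "d k = (if k < m then f k else e (k - m))" for k
  have PFE: "polar q (f i) (e j) = (if i = j then 1 else 0)" if "i < m" "j < m" for i j
    using PEF[OF that(2,1)] pol_sym by metis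
  have du: "dual N b d"
    unfolding dual_def
  proof (intro allI impI)
    fix i j assume ij: "i < N" "j < N"
    show "polar q (b i) (d j) = (if i = j then 1 else 0)"
      using ij PEF PEE PFF PFE unfolding N_def b_def d_def
      by (cases "i < m"; cases "j < m") auto
  qed
  have sp: "span (b ` {..<N}) = UNIV"
  proof -
    have "b ` {..<N} = e ` {..<m} \<union> f ` {..<m}"
    proof
      show "b ` {..<N} \<subseteq> e ` {..<m} \<union> f ` {..<m}"
        unfolding N_def b_def by (auto intro!: imageI)
      show "e ` {..<m} \<union> f ` {..<m} \<subseteq> b ` {..<N}"
      proof
        fix x assume "x \<in> e ` {..<m} \<union> f ` {..<m}"
        then consider i where "i < m" "x = e i" | i where "i < m" "x = f i" by auto
        then show "x \<in> b ` {..<N}"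
        proof cases
          case 1 then show ?thesis unfolding N_def b_def by (intro image_eqI[of _ _ i]) auto
        next
          case 2 then show ?thesis unfolding N_def b_def by (intro image_eqI[of _ _ "i + m"]) auto
        qed
      qed
    qed
    then show ?thesis using sp0 by simp
  qed
  define \<gamma> :: "nat \<Rightarrow> 'g" where "\<gamma> = (\<lambda>_. 0)"
  have A: "\<forall>i<N. \<forall>j<N. Fin (\<gamma> i + \<gamma> j + 0) \<le> v (polar q (b i) (b j))"
  proof (intro allI impI)
    fix i j assume ij: "i < N" "j < N"
    have "polar q (b i) (b j) = 0 \<or> polar q (b i) (b j) = 1"
      using ij PEF PEE PFF PFE unfolding N_def b_def
      by (cases "i < m"; cases "j < m") auto
    then show "Fin (\<gamma> i + \<gamma> j + 0) \<le> v (polar q (b i) (b j))"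
      unfolding \<gamma>_def using v_zero[OF val] v_one[OF val] by auto
  qed
  have B: "\<forall>i<N. Fin (\<gamma> i + \<gamma> i) \<le> v (q (b i))"
    unfolding \<gamma>_def b_def N_def using qe qf' v_zero[OF val] by auto
  have C: "\<forall>i<N. nrm N d \<gamma> (d i) = Fin (- \<gamma> i - 0)"
  proof (intro allI impI)
    fix i assume i: "i < N"
    define j where "j = (if i < m then i + m else i - m)"
    have j: "j < N" unfolding j_def using i N_def by auto
    have "nrm N d \<gamma> (d i) = v 1 + Fin (\<gamma> j)"
    proof (rule alpha_unit[OF j])
      fix k assume k: "k < N"
      show "polar q (d i) (d k) = (if k = j then 1 else 0)"
        using i k PEF PEE PFF PFE unfolding N_def d_def j_def
        by (cases "i < m"; cases "k < m") auto
    qed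
    then show "nrm N d \<gamma> (d i) = Fin (- \<gamma> i - 0)" unfolding \<gamma>_def using v_one[OF val] by simp
  qed
  have "v_norm v scale (nrm N d \<gamma>) \<and> compatible_depth v q (nrm N d \<gamma>) 0"
    by (rule norm_ok[OF du sp order_refl A B C])
  then show ?thesis by blast
qed

end

theorem proposition4p3:
  fixes v :: "'k::field \<Rightarrow> 'g::linordered_ab_group_add extended"
    and scale :: "'k \<Rightarrow> 'v::ab_group_add \<Rightarrow> 'v"
  assumes "divisible_group TYPE('g)"
    and "valuation v"
    and "fin_dim_space scale"
  shows "(\<forall>q. quadratic_form scale q \<and> nonsingular q \<longrightarrow>
            (\<exists>\<alpha> \<epsilon>. v_norm v scale \<alpha> \<and> \<epsilon> \<in> half_value_group v \<and> 0 \<le> \<epsilon> \<and> Fin \<epsilon> \<le> v 2 \<and>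
                    compatible_depth v q \<alpha> \<epsilon>))
       \<and> (\<forall>q. quadratic_form scale q \<and> hyperbolic scale q \<longrightarrow>
            (\<exists>\<alpha>. v_norm v scale \<alpha> \<and> compatible_depth v q \<alpha> 0))"
proof -
  have vs: "vector_space scale" using assms(3) unfolding fin_dim_space_def by blast
  obtain B0 where B0: "finite B0" "module.span scale B0 = UNIV"
    using assms(3) unfolding fin_dim_space_def by blast
  have QVI: "QV scale q v" if "quadratic_form scale q" for q
    by (rule QV.intro[OF QF.intro[OF vs QF_axioms.intro[OF that]] QV_axioms.intro[OF assms(2)]])
  show ?thesis
  proof (intro conjI allI impI)
    fix q assume h: "quadratic_form scale q \<and> nonsingular q"
    interpret Q: QV scale q v by (rule QVI) (use h in blast)
    obtain n b d p where "Q.sys n b d p" "Q.span (b ` {..<n}) = UNIV"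
      using Q.construct[OF conjunct2[OF h] B0] by blast
    then show "\<exists>\<alpha> \<epsilon>. v_norm v scale \<alpha> \<and> \<epsilon> \<in> half_value_group v \<and> 0 \<le> \<epsilon> \<and> Fin \<epsilon> \<le> v 2 \<and>
                    compatible_depth v q \<alpha> \<epsilon>"
      by (rule Q.nonsing_case[OF assms(1)])
  next
    fix q assume h: "quadratic_form scale q \<and> hyperbolic scale q"
    interpret Q: QV scale q v by (rule QVI) (use h in blast)
    show "\<exists>\<alpha>. v_norm v scale \<alpha> \<and> compatible_depth v q \<alpha> 0"
      by (rule Q.hyp_case) (use h in blast)
  qed
qed

end
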